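(* Let $D$ be a squarefree integer, not a perfect square, with $3\mid D$, and let $A,B\in\mathbb{Z}$ be such that $S^{(D;A,B)}$ is smooth, $A\equiv -D\pmod 9$ and $B\equiv 0\pmod 9$. Then $S^{(D;A,B)}(\mathbb{Q}_3)\neq\emptyset$, and $\mathrm{ev}_{\alpha,3}(\mathbf{t})=0$ for every $\mathbf{t}\in S^{(D;A,B)}(\mathbb{Q}_3)$.
   Context: $S^{(D;A,B)}\subset\mathbb{P}^4_{\mathbb{Q}}$ is defined by $t_0t_1=t_2^2-Dt_3^2$ and $(t_0+At_1)(t_0+Bt_1)=t_2^2-Dt_4^2$; smooth iff $AB\neq0$, $A\neq B$, $A^2-2AB+B^2-2A-2B+1\neq0$. For smooth such a surface, a place $v$ and $\mathbf{t}\in S(\mathbb{Q}_v)$, at least one of $t_0/(t_0+At_1)$, $t_1/(t_0+At_1)$, $t_0/(t_0+Bt_1)$, $t_1/(t_0+Bt_1)$ is defined and nonzero at $\mathbf{t}$; for such $q$, $\mathrm{ev}_{\alpha,v}(\mathbf{t})=0$ if the Hilbert symbol $(q,D)_v=1$ and $1/2$ otherwise, independently of the choice of $q$. *)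

theory Defs
  imports Complex_Main "HOL-Computational_Algebra.Squarefree"
begin

text \<open>A 3-adic integer is a compatible sequence of residues x n in {0..<3^n}.
  Ring operations are computed componentwise modulo 3^n.\<close>

type_synonym zp = "nat \<Rightarrow> int"

definition Zp3 :: "zp set" where
  "Zp3 = {x. \<forall>n. 0 \<le> x n \<and> x n < 3 ^ n \<and> x (Suc n) mod 3 ^ n = x n}"

definition zp_of_int :: "int \<Rightarrow> zp" where
  "zp_of_int c = (\<lambda>n. c mod 3 ^ n)"

definition zp_zero :: zp where "zp_zero = zp_of_int 0"

definition zp_add :: "zp \<Rightarrow> zp \<Rightarrow> zp" where
  "zp_add x y = (\<lambda>n. (x n + y n) mod 3 ^ n)"

definition zp_neg :: "zp \<Rightarrow> zp" where
  "zp_neg x = (\<lambda>n. (- x n) mod 3 ^ n)"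

definition zp_mul :: "zp \<Rightarrow> zp \<Rightarrow> zp" where
  "zp_mul x y = (\<lambda>n. (x n * y n) mod 3 ^ n)"

text \<open>An element of Q_3 is represented by a pair (a, b) with a, b in Z_3, b nonzero,
  standing for a/b; equality is cross-multiplication.\<close>

type_synonym qp = "zp \<times> zp"

definition Q3 :: "qp set" where
  "Q3 = {(a, b). a \<in> Zp3 \<and> b \<in> Zp3 \<and> b \<noteq> zp_zero}"

definition q3_eq :: "qp \<Rightarrow> qp \<Rightarrow> bool" where
  "q3_eq x y = (zp_mul (fst x) (snd y) = zp_mul (fst y) (snd x))"

definition q3_add :: "qp \<Rightarrow> qp \<Rightarrow> qp" where
  "q3_add x y = (zp_add (zp_mul (fst x) (snd y)) (zp_mul (fst y) (snd x)), zp_mul (snd x) (snd y))"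

definition q3_mul :: "qp \<Rightarrow> qp \<Rightarrow> qp" where
  "q3_mul x y = (zp_mul (fst x) (fst y), zp_mul (snd x) (snd y))"

definition q3_of_zp :: "zp \<Rightarrow> qp" where
  "q3_of_zp a = (a, zp_of_int 1)"

definition q3_zero :: qp where "q3_zero = q3_of_zp zp_zero"

definition hilbert3 :: "qp \<Rightarrow> qp \<Rightarrow> int" where
  "hilbert3 a b =
     (if \<exists>x\<in>Q3. \<exists>y\<in>Q3. \<exists>z\<in>Q3.
            \<not> (q3_eq x q3_zero \<and> q3_eq y q3_zero \<and> q3_eq z q3_zero) \<and>
            q3_eq (q3_mul z z) (q3_add (q3_mul a (q3_mul x x)) (q3_mul b (q3_mul y y)))
      then 1 else -1)"

definition smooth_S :: "int \<Rightarrow> int \<Rightarrow> bool" where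
  "smooth_S A B \<longleftrightarrow> A * B \<noteq> 0 \<and> A \<noteq> B \<and> A^2 - 2*A*B + B^2 - 2*A - 2*B + 1 \<noteq> 0"

text \<open>A point of S(Q_3) is represented by homogeneous coordinates t 0, ..., t 4 in Z_3,
  not all zero (every point of P^4(Q_3) has such representatives).\<close>

definition in_S3 :: "int \<Rightarrow> int \<Rightarrow> int \<Rightarrow> (nat \<Rightarrow> zp) \<Rightarrow> bool" where
  "in_S3 D A B t \<longleftrightarrow>
     (\<forall>i\<le>4. t i \<in> Zp3) \<and> (\<exists>i\<le>4. t i \<noteq> zp_zero) \<and>
     zp_mul (t 0) (t 1) =
       zp_add (zp_mul (t 2) (t 2)) (zp_neg (zp_mul (zp_of_int D) (zp_mul (t 3) (t 3)))) \<and>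
     zp_mul (zp_add (t 0) (zp_mul (zp_of_int A) (t 1))) (zp_add (t 0) (zp_mul (zp_of_int B) (t 1))) =
       zp_add (zp_mul (t 2) (t 2)) (zp_neg (zp_mul (zp_of_int D) (zp_mul (t 4) (t 4))))"

definition q_cands :: "int \<Rightarrow> int \<Rightarrow> (nat \<Rightarrow> zp) \<Rightarrow> qp list" where
  "q_cands A B t =
     [(t 0, zp_add (t 0) (zp_mul (zp_of_int A) (t 1))),
      (t 1, zp_add (t 0) (zp_mul (zp_of_int A) (t 1))),
      (t 0, zp_add (t 0) (zp_mul (zp_of_int B) (t 1))),
      (t 1, zp_add (t 0) (zp_mul (zp_of_int B) (t 1)))]"

definition q_admissible :: "int \<Rightarrow> int \<Rightarrow> (nat \<Rightarrow> zp) \<Rightarrow> qp \<Rightarrow> bool" where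
  "q_admissible A B t q \<longleftrightarrow> q \<in> set (q_cands A B t) \<and> snd q \<noteq> zp_zero \<and> fst q \<noteq> zp_zero"

definition ev_alpha3 :: "int \<Rightarrow> int \<Rightarrow> int \<Rightarrow> (nat \<Rightarrow> zp) \<Rightarrow> real" where
  "ev_alpha3 D A B t =
     (let q = (SOME q. q_admissible A B t q)
      in if hilbert3 q (q3_of_zp (zp_of_int D)) = 1 then 0 else 1/2)"

end

theory Submission
  imports Defs
begin


lemma Zp3_D: "x \<in> Zp3 \<Longrightarrow> 0 \<le> x n \<and> x n < 3^n \<and> x (Suc n) mod 3^n = x n"
  by (simp add: Zp3_def)

lemma Zp3_mod: "x \<in> Zp3 \<Longrightarrow> x n mod 3^n = x n"
  using Zp3_D[of x n] by simp

lemma Zp3_0: "x \<in> Zp3 \<Longrightarrow> x 0 = 0"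
  using Zp3_D[of x 0] by simp

lemma Zp3_compat: assumes "x \<in> Zp3" "m \<le> n" shows "x n mod 3^m = x m"
  using assms(2)
proof (induction n)
  case 0 then show ?case using Zp3_0[OF assms(1)] by simp
next
  case (Suc n)
  show ?case
  proof (cases "m = Suc n")
    case True then show ?thesis using Zp3_mod[OF assms(1), of "Suc n"] by simp
  next
    case False
    then have "m \<le> n" using Suc by simp
    have "x (Suc n) mod 3^m = (x (Suc n) mod 3^n) mod 3^m"
      using \<open>m \<le> n\<close> by (simp add: mod_mod_cancel le_imp_power_dvd)
    also have "\<dots> = x n mod 3^m" using Zp3_D[OF assms(1)] by simp
    finally show ?thesis using Suc.IH[OF \<open>m \<le> n\<close>] by simp
  qed
qed

lemma Zp3_I: assumes "\<And>n. 0 \<le> x n" "\<And>n. x n < 3^n" "\<And>n. x (Suc n) mod 3^n = x n"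
  shows "x \<in> Zp3" using assms by (simp add: Zp3_def)

lemma modcompat_I: assumes "\<And>n. x n = f n mod 3^n" "\<And>n. f (Suc n) mod 3^n = f n mod 3^n"
  shows "x \<in> Zp3"
proof (rule Zp3_I)
  fix n
  show "0 \<le> x n" "x n < 3^n" using assms(1) by auto
  have "x (Suc n) mod 3^n = f (Suc n) mod 3^n"
    using assms(1) by (simp add: mod_mod_cancel)
  also have "\<dots> = f n mod 3^n" using assms(2)[of n] by simp
  finally show "x (Suc n) mod 3^n = x n" using assms(1) by simp
qed

lemma Zp3_Suc: "x \<in> Zp3 \<Longrightarrow> x (Suc n) mod 3^n = x n mod 3^n"
  using Zp3_D[of x n] by simp

lemma zp_of_int_Zp3[simp]: "zp_of_int c \<in> Zp3"
  by (rule modcompat_I[of _ "\<lambda>n. c"]) (auto simp: zp_of_int_def)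

lemma zp_zero_Zp3[simp]: "zp_zero \<in> Zp3" by (simp add: zp_zero_def)

lemma zp_zero_app[simp]: "zp_zero n = 0" by (simp add: zp_zero_def zp_of_int_def)

lemma zp_add_Zp3[simp]: "x \<in> Zp3 \<Longrightarrow> y \<in> Zp3 \<Longrightarrow> zp_add x y \<in> Zp3"
  by (rule modcompat_I[of _ "\<lambda>n. x n + y n"]) (simp add: zp_add_def, rule mod_add_cong, simp_all add: Zp3_Suc)

lemma zp_mul_Zp3[simp]: "x \<in> Zp3 \<Longrightarrow> y \<in> Zp3 \<Longrightarrow> zp_mul x y \<in> Zp3"
  by (rule modcompat_I[of _ "\<lambda>n. x n * y n"]) (simp add: zp_mul_def, rule mod_mult_cong, simp_all add: Zp3_Suc)

lemma zp_neg_Zp3[simp]: "x \<in> Zp3 \<Longrightarrow> zp_neg x \<in> Zp3"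
  by (rule modcompat_I[of _ "\<lambda>n. - x n"]) (simp add: zp_neg_def, rule mod_minus_cong, simp_all add: Zp3_Suc)



lemma sq_mod3: fixes u :: int assumes "\<not> 3 dvd u" shows "u^2 mod 3 = 1"
proof -
  have "u mod 3 = 1 \<or> u mod 3 = 2" using assms by presburger
  moreover have "u^2 mod 3 = (u mod 3)^2 mod 3" by (simp add: power_mod)
  ultimately show ?thesis by auto
qed

lemma coprime3: fixes u :: int assumes "\<not> 3 dvd u" shows "coprime (3^n) u"
proof -
  have "prime (3::int)" by simp
  then have "coprime 3 u" using assms prime_imp_coprime by blast
  then show ?thesis by simp
qed

lemma dvd_small: fixes z :: int assumes "m dvd z" "\<bar>z\<bar> < m" shows "z = 0"
proof (rule ccontr)
  assume "z \<noteq> 0"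
  then have "\<bar>m\<bar> \<le> \<bar>z\<bar>" using dvd_imp_le_int assms(1) by blast
  then show False using assms(2) by linarith
qed

lemma hensel:
  fixes e :: int and f :: "nat \<Rightarrow> int"
  assumes e3: "\<not> 3 dvd e" and fc: "\<And>n. f (Suc n) mod 3^n = f n mod 3^n"
    and f1: "f 1 mod 3 = e mod 3"
  shows "\<exists>s\<in>Zp3. \<forall>n. (e * s n ^ 2) mod 3^n = f n mod 3^n \<and> (n \<ge> 1 \<longrightarrow> s n mod 3 = 1)"
proof -
  define good where "good n x \<longleftrightarrow> 0 \<le> x \<and> x < 3^n \<and> (e*x^2) mod 3^n = f n mod 3^n \<and> x mod 3 = 1"
    for n x
  have ex: "\<exists>x. good n x" if "n \<ge> 1" for n
    using that
  proof (induction n rule: dec_induct)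
    case base
    show ?case using f1 by (intro exI[of _ 1]) (simp add: good_def)
  next
    case (step n)
    then obtain x where gx: "good n x" by blast
    have "(e*x^2) mod 3^n = f (Suc n) mod 3^n" using gx fc[of n] by (simp add: good_def)
    then have "3^n dvd e*x^2 - f (Suc n)" by (simp add: mod_eq_dvd_iff)
    then obtain r where r: "e*x^2 - f (Suc n) = 3^n * r" by blast
    define w where "w = 2*e*x"
    have w3: "\<not> 3 dvd w"
    proof
      assume "3 dvd w"
      then have "3 dvd e * (2*x)" by (simp add: w_def ac_simps)
      moreover have "coprime (3::int) (2*x)"
      proof -
        have "\<not> 3 dvd 2*x"
        proof -
          have "x mod 3 = 1" using gx unfolding good_def by blast
        then show "\<not> 3 dvd 2*x" by presburger
        qed
        then show ?thesis using coprime3[of "2*x" 1] by simp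
      qed
      ultimately have "3 dvd e" by (meson coprime_dvd_mult_left_iff)
      then show False using e3 by simp
    qed
    define j where "j = (-r*w) mod 3"
    have j: "0 \<le> j" "j < 3" by (auto simp: j_def)
    have "(1::int) mod 3 = w^2 mod 3" using sq_mod3[OF w3] by simp
    then have d1: "3 dvd 1 - w^2" by (simp only: mod_eq_dvd_iff)
    have "((-r*w) mod 3) mod 3 = (-r*w) mod 3" by simp
    then have "3 dvd (-r*w) mod 3 - (-r*w)" by (simp only: mod_eq_dvd_iff)
    then have d2: "3 dvd j + r*w" unfolding j_def by simp
    have "r + w*j = r*(1 - w^2) + w*(j + r*w)" by (simp add: algebra_simps power2_eq_square)
    then have d3: "3 dvd r + w*j" using d1 d2 by (metis dvd_add dvd_mult dvd_mult2)
    have "(3::int) dvd 3^n" using step(1) by (simp add: dvd_power)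
    then have d4: "3 dvd r + w*j + e*j^2*3^n" using d3 by simp
    define y where "y = x + j*3^n"
    have "e*y^2 - f (Suc n) = 3^n * (r + w*j + e*j^2*3^n)"
      unfolding y_def w_def using r by (simp add: algebra_simps power2_eq_square)
    then have "3^Suc n dvd e*y^2 - f (Suc n)" using d4 by (simp add: mult_dvd_mono)
    then have m: "(e*y^2) mod 3^Suc n = f (Suc n) mod 3^Suc n" by (simp add: mod_eq_dvd_iff)
    have "3 dvd y - x" unfolding y_def using \<open>3 dvd 3^n\<close> by simp
    then have ym: "y mod 3 = x mod 3" by (simp only: mod_eq_dvd_iff)
    have yb: "0 \<le> y" "y < 3^Suc n" proof -
      have h1: "j*3^n \<le> 2*3^n" using j by (intro mult_right_mono) auto
      have h2: "0 \<le> j*3^n" using j by simp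
      have h3: "0 \<le> x" "x < 3^n" using gx unfolding good_def by auto
      have h4: "(3::int)^Suc n = 3*3^n" by simp
      show "0 \<le> y" "y < 3^Suc n" unfolding y_def h4 using h1 h2 h3 by linarith+
    qed
    have "x mod 3 = 1" using gx unfolding good_def by blast
    then have "good (Suc n) y" unfolding good_def using m ym yb by simp
    then show ?case by blast
  qed
  have uniq: "x = y" if "n \<ge> 1" "good n x" "good n y" for n x y
  proof -
    have "(e*x^2) mod 3^n = (e*y^2) mod 3^n" using that unfolding good_def by simp
    then have "3^n dvd e*x^2 - e*y^2" by (simp only: mod_eq_dvd_iff)
    moreover have "e*x^2 - e*y^2 = (x - y) * (e * (x + y))" by (simp add: algebra_simps power2_eq_square)
    moreover have "x mod 3 = 1" "y mod 3 = 1" using that unfolding good_def by blast+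
    then have "\<not> 3 dvd x + y" by presburger
    then have "coprime (3^n) (e * (x + y))" using e3 coprime3 by (simp)
    ultimately have "3^n dvd x - y" by (metis coprime_dvd_mult_left_iff)
    moreover have "\<bar>x - y\<bar> < 3^n" using that unfolding good_def by auto
    ultimately show ?thesis using dvd_small by fastforce
  qed
  define s where "s n = (if n = 0 then 0 else THE x. good n x)" for n
  have sg: "good n (s n)" if "n \<ge> 1" for n
  proof -
    have "\<exists>!x. good n x" using ex[OF that] uniq[OF that] by blast
    then show ?thesis unfolding s_def using that by (simp add: theI')
  qed
  have sZ: "s \<in> Zp3"
  proof (rule Zp3_I)
    fix n
    show "0 \<le> s n" "s n < 3^n" using sg[of n] by (cases "n = 0"; auto simp: s_def good_def)+
    show "s (Suc n) mod 3^n = s n"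
    proof (cases "n = 0")
      case True then show ?thesis by (simp add: s_def)
    next
      case False
      then have n1: "n \<ge> 1" by simp
      let ?z = "s (Suc n) mod 3^n"
      have gs: "good (Suc n) (s (Suc n))" using sg by simp
      have "(?z^2) mod 3^n = (s (Suc n)^2) mod 3^n" by (simp add: power_mod)
      then have "(e*?z^2) mod 3^n = (e*s (Suc n)^2) mod 3^n" by (rule mod_mult_cong[OF refl])
      also have "\<dots> = ((e*s (Suc n)^2) mod 3^Suc n) mod 3^n" by (simp add: mod_mod_cancel)
      also have "\<dots> = (f (Suc n) mod 3^Suc n) mod 3^n" using gs by (simp add: good_def)
      also have "\<dots> = f n mod 3^n" using fc by (simp add: mod_mod_cancel)
      finally have a: "(e*?z^2) mod 3^n = f n mod 3^n" .
      have "3 dvd (3::int)^n" using n1 by (simp add: dvd_power)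
      then have "?z mod 3 = s (Suc n) mod 3" by (simp add: mod_mod_cancel)
      then have "good n ?z" using a gs by (simp add: good_def)
      then show ?thesis using uniq[OF n1 _ sg[OF n1]] by blast
    qed
  qed
  show ?thesis
  proof (intro bexI[OF _ sZ] allI)
    fix n show "(e * s n ^ 2) mod 3^n = f n mod 3^n \<and> (n \<ge> 1 \<longrightarrow> s n mod 3 = 1)"
      using sg[of n] by (cases "n = 0") (auto simp: good_def)
  qed
qed



definition zv :: "zp \<Rightarrow> nat" where "zv x = (LEAST k. x (Suc k) \<noteq> 0)"
definition zdig :: "zp \<Rightarrow> int" where "zdig x = (x (Suc (zv x)) div 3^(zv x)) mod 3"

lemma trunc3:
  fixes m :: int
  assumes "3^k dvd m" "k < n"
  shows "3^k dvd (m mod 3^n)" "((m mod 3^n) div 3^k) mod 3 = (m div 3^k) mod 3"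
proof -
  have "\<exists>w. m = 3^k * w" using assms(1) by (auto simp: dvd_def)
  then obtain w where w: "m = 3^k * w" by blast
  have "\<exists>j. n = k + Suc j" using assms(2) by (auto dest!: less_imp_Suc_add)
  then obtain j where nj: "n = k + Suc j" by blast
  have pn: "(3::int)^n = 3^k * (3 * 3^j)" unfolding nj by (simp add: power_add)
  define q where "q = m div 3^n"
  have dm: "m div 3^n * 3^n + m mod 3^n = m" by (rule div_mult_mod_eq)
  have e: "m mod 3^n = 3^k * (w - 3 * (3^j * q))"
  proof -
    have "m mod 3^n = m - q * 3^n" using dm unfolding q_def by linarith
    also have "\<dots> = 3^k * w - q * (3^k * (3 * 3^j))" using w pn by simp
    also have "\<dots> = 3^k * (w - 3 * (3^j * q))" by (simp add: algebra_simps)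
    finally show ?thesis .
  qed
  then show "3^k dvd (m mod 3^n)" by simp
  have "(m mod 3^n) div 3^k = w - 3 * (3^j * q)" using e by simp
  moreover have "m div 3^k = w" using w by simp
  moreover have "(w - 3 * (3^j * q)) mod 3 = w mod 3" by (simp add: mod_eq_dvd_iff)
  ultimately show "((m mod 3^n) div 3^k) mod 3 = (m div 3^k) mod 3" by simp
qed

lemma zv_low: assumes "x \<in> Zp3" "n \<le> zv x" shows "x n = 0"
proof (cases "\<exists>k. x (Suc k) \<noteq> 0")
  case True
  show ?thesis
  proof (cases n)
    case 0 then show ?thesis using Zp3_0[OF assms(1)] by simp
  next
    case (Suc j)
    then have "j < zv x" using assms(2) by simp
    then show ?thesis unfolding Suc zv_def using not_less_Least by blast
  qed
next
  case False
  then show ?thesis using Zp3_0[OF assms(1)] by (cases n) auto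
qed

lemma zv_nz: assumes "x \<in> Zp3" "x \<noteq> zp_zero" shows "x (Suc (zv x)) \<noteq> 0"
proof -
  obtain m where "x m \<noteq> 0" using assms(2) by (auto simp: fun_eq_iff)
  then obtain k where "x (Suc k) \<noteq> 0" using Zp3_0[OF assms(1)] by (cases m) auto
  then show ?thesis unfolding zv_def by (rule LeastI)
qed

lemma zv_rec:
  assumes "x \<in> Zp3" "k < n" "x n = m mod 3^n" "3^k dvd m" "\<not> 3 dvd (m div 3^k)"
  shows "x \<noteq> zp_zero" "zv x = k" "zdig x = (m div 3^k) mod 3"
proof -
  have low: "x j = 0" if "j \<le> k" for j
  proof -
    have "x j = x n mod 3^j" using Zp3_compat[OF assms(1), of j n] that assms(2) by simp
    also have "\<dots> = m mod 3^j" using assms(3) that assms(2)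
      by (simp add: mod_mod_cancel le_imp_power_dvd)
    also have "\<dots> = 0" using assms(4) that by (simp add: dvd_imp_mod_0 dvd_trans[OF le_imp_power_dvd])
    finally show ?thesis .
  qed
  have p: "(3::int)^Suc k dvd 3^n" using assms(2) by (intro le_imp_power_dvd) simp
  have xs: "x (Suc k) = m mod 3^Suc k"
  proof -
    have "x (Suc k) = x n mod 3^Suc k" using Zp3_compat[OF assms(1), of "Suc k" n] assms(2) by simp
    also have "\<dots> = (m mod 3^n) mod 3^Suc k" using assms(3) by simp
    also have "\<dots> = m mod 3^Suc k" by (rule mod_mod_cancel[OF p])
    finally show ?thesis .
  qed
  have t: "((m mod 3^Suc k) div 3^k) mod 3 = (m div 3^k) mod 3" using trunc3[OF assms(4), of "Suc k"] by simp
  have "(m div 3^k) mod 3 \<noteq> 0" using assms(5) by (simp add: dvd_eq_mod_eq_0)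
  then have nz: "x (Suc k) \<noteq> 0" using t xs by auto
  then show "x \<noteq> zp_zero" by auto
  show zk: "zv x = k" unfolding zv_def
  proof (rule Least_equality)
    show "x (Suc k) \<noteq> 0" by (rule nz)
    fix j assume "x (Suc j) \<noteq> 0"
    then show "k \<le> j" using low[of "Suc j"] by (cases "Suc j \<le> k") auto
  qed
  show "zdig x = (m div 3^k) mod 3" unfolding zdig_def zk using t xs by simp
qed

lemma zv_fwd:
  assumes "x \<in> Zp3" "x \<noteq> zp_zero" "zv x < n"
  shows "3^(zv x) dvd x n" "(x n div 3^(zv x)) mod 3 = zdig x" "zdig x \<noteq> 0"
proof -
  let ?v = "zv x"
  have "x n mod 3^?v = x ?v" using Zp3_compat[OF assms(1)] assms(3) by simp
  also have "\<dots> = 0" using zv_low[OF assms(1)] by simp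
  finally show d: "3^?v dvd x n" by (simp add: dvd_eq_mod_eq_0)
  have xs: "x n mod 3^Suc ?v = x (Suc ?v)" using Zp3_compat[OF assms(1), of "Suc ?v" n] assms(3) by simp
  have t: "((x n mod 3^Suc ?v) div 3^?v) mod 3 = (x n div 3^?v) mod 3" using trunc3[OF d, of "Suc ?v"] by simp
  then show "(x n div 3^?v) mod 3 = zdig x" unfolding zdig_def using xs by simp
  have d2: "3^?v dvd x (Suc ?v)" using trunc3(1)[OF d, of "Suc ?v"] xs by simp
  then obtain w where w: "x (Suc ?v) = 3^?v * w" by blast
  have "0 \<le> x (Suc ?v)" "x (Suc ?v) < 3^Suc ?v" using Zp3_D[OF assms(1), of "Suc ?v"] by auto
  moreover have pp: "(0::int) < 3^?v" by simp
  ultimately have "0 \<le> 3^?v * w" "3^?v * w < 3^?v * 3" using w by (simp_all add: ac_simps)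
  then have "0 \<le> w" "w < 3" using pp by (simp_all add: zero_le_mult_iff mult_less_cancel_left_pos)
  moreover have "w \<noteq> 0" using zv_nz[OF assms(1,2)] w by auto
  ultimately have "w mod 3 \<noteq> 0" by auto
  then show "zdig x \<noteq> 0" unfolding zdig_def using w by simp
qed

lemma zv_dvd: assumes "x \<in> Zp3" shows "3^(zv x) dvd x n"
proof (cases "x = zp_zero")
  case True then show ?thesis by simp
next
  case False
  show ?thesis
  proof (cases "zv x < n")
    case True then show ?thesis using zv_fwd[OF assms False] by simp
  next
    case False then show ?thesis using zv_low[OF assms] by simp
  qed
qed

lemma zdig_cases: assumes "x \<in> Zp3" "x \<noteq> zp_zero" shows "zdig x = 1 \<or> zdig x = 2"
proof -
  have "zdig x \<noteq> 0" using zv_fwd(3)[OF assms, of "Suc (zv x)"] by simp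
  moreover have "0 \<le> zdig x" "zdig x < 3" unfolding zdig_def by auto
  ultimately show ?thesis by auto
qed



lemma not3_mult: fixes u w :: int assumes "\<not> 3 dvd u" "\<not> 3 dvd w" shows "\<not> 3 dvd u * w"
proof -
  have "coprime 3 w" using coprime3[OF assms(2), of 1] by simp
  then have "3 dvd u * w \<longleftrightarrow> 3 dvd u" by (rule coprime_dvd_mult_left_iff)
  then show ?thesis using assms(1) by simp
qed

lemma fwd_obtain:
  assumes "x \<in> Zp3" "x \<noteq> zp_zero" "zv x < n"
  obtains u where "x n = 3^(zv x) * u" "u mod 3 = zdig x" "\<not> 3 dvd u"
proof -
  have "\<exists>u. x n = 3^(zv x) * u" using zv_fwd(1)[OF assms] by (auto simp: dvd_def)
  then obtain u where u: "x n = 3^(zv x) * u" by blast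
  have "u mod 3 = zdig x" using zv_fwd(2)[OF assms] u by simp
  moreover then have "\<not> 3 dvd u" using zv_fwd(3)[OF assms] by (simp add: dvd_eq_mod_eq_0)
  ultimately show ?thesis using that u by blast
qed

lemma zv_mul:
  assumes "x \<in> Zp3" "y \<in> Zp3" "x \<noteq> zp_zero" "y \<noteq> zp_zero"
  shows "zp_mul x y \<noteq> zp_zero" "zv (zp_mul x y) = zv x + zv y"
    "zdig (zp_mul x y) = (zdig x * zdig y) mod 3"
proof -
  let ?a = "zv x" and ?b = "zv y"
  let ?n = "Suc (?a + ?b)"
  obtain u where u: "x ?n = 3^?a * u" "u mod 3 = zdig x" "\<not> 3 dvd u"
    using fwd_obtain[OF assms(1,3), of ?n] by auto
  obtain w where w: "y ?n = 3^?b * w" "w mod 3 = zdig y" "\<not> 3 dvd w"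
    using fwd_obtain[OF assms(2,4), of ?n] by auto
  define m where "m = x ?n * y ?n"
  have m: "m = 3^(?a + ?b) * (u * w)" unfolding m_def u w by (simp add: power_add ac_simps)
  have e: "zp_mul x y ?n = m mod 3^?n" by (simp add: zp_mul_def m_def)
  have d: "3^(?a+?b) dvd m" using m by simp
  have q: "m div 3^(?a+?b) = u * w" using m by simp
  have nd: "\<not> 3 dvd (m div 3^(?a+?b))" using q not3_mult[OF u(3) w(3)] by simp
  note r = zv_rec[OF zp_mul_Zp3[OF assms(1,2)] _ e d nd]
  show "zp_mul x y \<noteq> zp_zero" "zv (zp_mul x y) = ?a + ?b" using r by auto
  have "zdig (zp_mul x y) = (u * w) mod 3" using r q by simp
  also have "\<dots> = ((u mod 3) * (w mod 3)) mod 3" by (rule mod_mult_eq[symmetric])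
  also have "\<dots> = (zdig x * zdig y) mod 3" using u(2) w(2) by simp
  finally show "zdig (zp_mul x y) = (zdig x * zdig y) mod 3" .
qed

lemma zv_add:
  assumes "x \<in> Zp3" "y \<in> Zp3" "x \<noteq> zp_zero" "\<And>n. 3^Suc (zv x) dvd y n"
  shows "zp_add x y \<noteq> zp_zero" "zv (zp_add x y) = zv x" "zdig (zp_add x y) = zdig x"
proof -
  let ?a = "zv x"
  let ?n = "Suc ?a"
  obtain u where u: "x ?n = 3^?a * u" "u mod 3 = zdig x" "\<not> 3 dvd u"
    using fwd_obtain[OF assms(1,3), of ?n] by auto
  have "\<exists>r. y ?n = 3^?n * r" using assms(4)[of ?n] by (auto simp: dvd_def)
  then obtain r where r: "y ?n = 3^?n * r" by blast
  define m where "m = x ?n + y ?n"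
  have m: "m = 3^?a * (u + 3 * r)" unfolding m_def u r by (simp add: algebra_simps)
  have e: "zp_add x y ?n = m mod 3^?n" by (simp add: zp_add_def m_def)
  have d: "3^?a dvd m" using m by simp
  have q: "m div 3^?a = u + 3 * r" using m by simp
  have qm: "(u + 3 * r) mod 3 = u mod 3" by simp
  have nd: "\<not> 3 dvd (m div 3^?a)" using q u(3) qm by (simp add: dvd_eq_mod_eq_0)
  note rr = zv_rec[OF zp_add_Zp3[OF assms(1,2)] _ e d nd]
  show "zp_add x y \<noteq> zp_zero" "zv (zp_add x y) = ?a" using rr by auto
  show "zdig (zp_add x y) = zdig x" using rr q qm u(2) by simp
qed

lemma zv_neg:
  assumes "x \<in> Zp3" "x \<noteq> zp_zero"
  shows "zp_neg x \<noteq> zp_zero" "zv (zp_neg x) = zv x" "zdig (zp_neg x) = (- zdig x) mod 3"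
proof -
  let ?a = "zv x"
  let ?n = "Suc ?a"
  obtain u where u: "x ?n = 3^?a * u" "u mod 3 = zdig x" "\<not> 3 dvd u"
    using fwd_obtain[OF assms(1,2), of ?n] by auto
  define m where "m = - x ?n"
  have m: "m = 3^?a * (- u)" unfolding m_def u by simp
  have e: "zp_neg x ?n = m mod 3^?n" by (simp add: zp_neg_def m_def)
  have d: "3^?a dvd m" using m by simp
  have q: "m div 3^?a = - u" unfolding m by (rule nonzero_mult_div_cancel_left) simp
  have nd: "\<not> 3 dvd (m div 3^?a)" using q u(3) by simp
  note rr = zv_rec[OF zp_neg_Zp3[OF assms(1)] _ e d nd]
  show "zp_neg x \<noteq> zp_zero" "zv (zp_neg x) = ?a" using rr by auto
  have "zdig (zp_neg x) = (- u) mod 3" using rr q by simp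
  also have "\<dots> = (- (u mod 3)) mod 3" by (rule mod_minus_eq[symmetric])
  also have "\<dots> = (- zdig x) mod 3" using u(2) by simp
  finally show "zdig (zp_neg x) = (- zdig x) mod 3" .
qed

lemma zv_const:
  assumes "c = 3^k * u" "\<not> 3 dvd u"
  shows "zp_of_int c \<noteq> zp_zero" "zv (zp_of_int c) = k" "zdig (zp_of_int c) = u mod 3"
proof -
  have e: "zp_of_int c (Suc k) = c mod 3^Suc k" by (simp add: zp_of_int_def)
  have d: "3^k dvd c" using assms by simp
  have q: "c div 3^k = u" using assms by simp
  note rr = zv_rec[OF zp_of_int_Zp3 _ e d] 
  show "zp_of_int c \<noteq> zp_zero" "zv (zp_of_int c) = k" "zdig (zp_of_int c) = u mod 3"
    using rr q assms(2) by auto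
qed

lemma add_zero_l[simp]: "y \<in> Zp3 \<Longrightarrow> zp_add zp_zero y = y"
  by (rule ext) (simp add: zp_add_def Zp3_mod)
lemma add_zero_r[simp]: "y \<in> Zp3 \<Longrightarrow> zp_add y zp_zero = y"
  by (rule ext) (simp add: zp_add_def Zp3_mod)
lemma mul_zero_l[simp]: "zp_mul zp_zero y = zp_zero"
  by (rule ext) (simp add: zp_mul_def)
lemma mul_zero_r[simp]: "zp_mul y zp_zero = zp_zero"
  by (rule ext) (simp add: zp_mul_def)
lemma neg_zero[simp]: "zp_neg zp_zero = zp_zero"
  by (rule ext) (simp add: zp_neg_def)
lemma add_comm: "zp_add x y = zp_add y x"
  by (rule ext) (simp add: zp_add_def add.commute)
lemma mul_comm: "zp_mul x y = zp_mul y x"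
  by (rule ext) (simp add: zp_mul_def mult.commute)



definition chi :: "int \<Rightarrow> zp \<Rightarrow> int" where "chi E x = (zdig x * E^(zv x)) mod 3"

definition NF :: "int \<Rightarrow> zp \<Rightarrow> zp \<Rightarrow> zp" where
  "NF D X Y = zp_add (zp_mul X X) (zp_neg (zp_mul (zp_of_int D) (zp_mul Y Y)))"

lemma not3_pow: fixes E :: int assumes "\<not> 3 dvd E" shows "\<not> 3 dvd E^k"
  by (induction k) (simp_all add: not3_mult[OF assms])

lemma chi_range: assumes "x \<in> Zp3" "x \<noteq> zp_zero" "\<not> 3 dvd E" shows "chi E x = 1 \<or> chi E x = 2"
proof -
  have "\<not> 3 dvd zdig x" using zdig_cases[OF assms(1,2)] by auto
  then have "\<not> 3 dvd zdig x * E^(zv x)" by (rule not3_mult[OF _ not3_pow[OF assms(3)]])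
  then have "chi E x \<noteq> 0" unfolding chi_def by (simp add: dvd_eq_mod_eq_0)
  moreover have "0 \<le> chi E x" "chi E x < 3" unfolding chi_def by auto
  ultimately show ?thesis by auto
qed

lemma chi_mul:
  assumes "x \<in> Zp3" "y \<in> Zp3" "x \<noteq> zp_zero" "y \<noteq> zp_zero"
  shows "chi E (zp_mul x y) = (chi E x * chi E y) mod 3"
proof -
  have "chi E (zp_mul x y) = (((zdig x * zdig y) mod 3) * E^(zv x + zv y)) mod 3"
    unfolding chi_def using zv_mul[OF assms] by simp
  also have "\<dots> = ((zdig x * zdig y) * E^(zv x + zv y)) mod 3" by (rule mod_mult_left_eq)
  also have "\<dots> = ((zdig x * E^zv x) * (zdig y * E^zv y)) mod 3" by (simp add: power_add ac_simps)
  also have "\<dots> = (((zdig x * E^zv x) mod 3) * ((zdig y * E^zv y) mod 3)) mod 3" by (rule mod_mult_eq[symmetric])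
  finally show ?thesis unfolding chi_def .
qed

lemma chi_neg:
  assumes "x \<in> Zp3" "x \<noteq> zp_zero"
  shows "chi E (zp_neg x) = (- chi E x) mod 3"
proof -
  have "chi E (zp_neg x) = (((- zdig x) mod 3) * E^(zv x)) mod 3"
    unfolding chi_def using zv_neg[OF assms] by simp
  also have "\<dots> = ((- zdig x) * E^(zv x)) mod 3" by (rule mod_mult_left_eq)
  also have "\<dots> = (- (zdig x * E^(zv x))) mod 3" by simp
  also have "\<dots> = (- ((zdig x * E^(zv x)) mod 3)) mod 3" by (rule mod_minus_eq[symmetric])
  finally show ?thesis unfolding chi_def .
qed

lemma dvd_of_zv:
  assumes "y \<in> Zp3" "y = zp_zero \<or> k \<le> zv y" shows "3^k dvd y n"
  using assms
proof (cases "y = zp_zero")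
  case False
  then have "(3::int)^k dvd 3^(zv y)" using assms(2) by (simp add: le_imp_power_dvd)
  then show ?thesis using zv_dvd[OF assms(1), of n] by (rule dvd_trans)
qed simp

lemma chi_add:
  assumes "x \<in> Zp3" "y \<in> Zp3" "x \<noteq> zp_zero" "y = zp_zero \<or> zv x < zv y"
  shows "zp_add x y \<noteq> zp_zero" "zv (zp_add x y) = zv x" "chi E (zp_add x y) = chi E x"
proof -
  have "3^Suc (zv x) dvd y n" for n using dvd_of_zv[OF assms(2), of "Suc (zv x)" n] assms(4) by auto
  note r = zv_add[OF assms(1-3) this]
  show "zp_add x y \<noteq> zp_zero" "zv (zp_add x y) = zv x" "chi E (zp_add x y) = chi E x"
    using r unfolding chi_def by auto
qed

lemma mod3_sq: fixes c :: int assumes "c = 1 \<or> c = 2" shows "(c * c) mod 3 = 1"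
  using assms by auto

lemma mod3_inv: fixes a b :: int assumes "a = 1 \<or> a = 2" "b = 1 \<or> b = 2" "(a * b) mod 3 = 1"
  shows "a = b"
  using assms by auto

context
  fixes D d E :: int
  assumes Dd: "D = 3 * d" and d3: "\<not> 3 dvd d" and Edef: "E = (- d) mod 3"
begin

lemma E3: "\<not> 3 dvd E" using d3 Edef by (simp add: dvd_eq_mod_eq_0) presburger

lemma constD: "zp_of_int D \<noteq> zp_zero" "zv (zp_of_int D) = 1" "chi E (zp_of_int D) = 2"
proof -
  note r = zv_const[of D 1 d, OF _ d3]
  show "zp_of_int D \<noteq> zp_zero" "zv (zp_of_int D) = 1" using r Dd by auto
  have "chi E (zp_of_int D) = ((d mod 3) * E) mod 3" unfolding chi_def using r Dd by simp
  also have "\<dots> = (d * (- d)) mod 3" unfolding Edef by (simp add: mod_mult_eq)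
  also have "\<dots> = 2"
  proof -
    have a: "(d * d) mod 3 = 1" using sq_mod3[OF d3] by (simp add: power2_eq_square)
    have "(d * (- d)) mod 3 = (- (d * d)) mod 3" by simp
    also have "\<dots> = (- ((d * d) mod 3)) mod 3" by (rule mod_minus_eq[symmetric])
    finally show ?thesis using a by simp
  qed
  finally show "chi E (zp_of_int D) = 2" .
qed

lemma sq_facts: assumes "X \<in> Zp3" "X \<noteq> zp_zero"
  shows "zp_mul X X \<noteq> zp_zero" "zv (zp_mul X X) = 2 * zv X" "chi E (zp_mul X X) = 1"
  using zv_mul[OF assms(1) assms(1) assms(2) assms(2)] chi_mul[OF assms(1) assms(1) assms(2) assms(2), of E] mod3_sq[OF chi_range[OF assms E3]]
  by auto

lemma R_facts: assumes "Y \<in> Zp3" "Y \<noteq> zp_zero"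
  shows "zp_neg (zp_mul (zp_of_int D) (zp_mul Y Y)) \<noteq> zp_zero" "zv (zp_neg (zp_mul (zp_of_int D) (zp_mul Y Y))) = 2 * zv Y + 1"
    "chi E (zp_neg (zp_mul (zp_of_int D) (zp_mul Y Y))) = 1"
proof -
  note s = sq_facts[OF assms(1,2)]
  have YY: "zp_mul Y Y \<in> Zp3" using assms by simp
  note m = zv_mul[OF zp_of_int_Zp3 YY constD(1) s(1)]
  note cm = chi_mul[OF zp_of_int_Zp3 YY constD(1) s(1), of E]
  have MZ: "zp_mul (zp_of_int D) (zp_mul Y Y) \<in> Zp3" using YY by simp
  note n = zv_neg[OF MZ m(1)]
  show "zp_neg (zp_mul (zp_of_int D) (zp_mul Y Y)) \<noteq> zp_zero" "zv (zp_neg (zp_mul (zp_of_int D) (zp_mul Y Y))) = 2 * zv Y + 1"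
    using n m s constD by auto
  have "chi E (zp_neg (zp_mul (zp_of_int D) (zp_mul Y Y))) = (- ((2 * 1) mod 3)) mod 3"
    using chi_neg[OF MZ m(1), of E] cm constD s by simp
  then show "chi E (zp_neg (zp_mul (zp_of_int D) (zp_mul Y Y))) = 1" by simp
qed

lemma NF_facts:
  assumes "X \<in> Zp3" "Y \<in> Zp3" "X \<noteq> zp_zero \<or> Y \<noteq> zp_zero"
  shows "NF D X Y \<noteq> zp_zero" "chi E (NF D X Y) = 1"
proof -
  let ?P = "zp_mul X X" and ?R = "zp_neg (zp_mul (zp_of_int D) (zp_mul Y Y))"
  have PZ: "?P \<in> Zp3" and RZ: "?R \<in> Zp3" using assms by simp_all
  have "NF D X Y \<noteq> zp_zero \<and> chi E (NF D X Y) = 1"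
  proof (cases "Y = zp_zero")
    case True
    then have X: "X \<noteq> zp_zero" using assms(3) by simp
    have "NF D X Y = ?P" unfolding NF_def using True PZ by simp
    then show ?thesis using sq_facts[OF assms(1) X] by simp
  next
    case Y: False
    note r = R_facts[OF assms(2) Y]
    show ?thesis
    proof (cases "X = zp_zero")
      case True
      have "NF D X Y = ?R" unfolding NF_def using True RZ by simp
      then show ?thesis using r by simp
    next
      case X: False
      note s = sq_facts[OF assms(1) X]
      show ?thesis
      proof (cases "zv ?P < zv ?R")
        case True
        note c = chi_add[OF PZ RZ s(1)]
        show ?thesis using c True s unfolding NF_def by simp
      next
        case False
        then have "zv ?R < zv ?P" using s(2) r(2) by presburger
        note c = chi_add[OF RZ PZ r(1)]
        show ?thesis using c \<open>zv ?R < zv ?P\<close> r unfolding NF_def by (simp add: add_comm)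
      qed
    qed
  qed
  then show "NF D X Y \<noteq> zp_zero" "chi E (NF D X Y) = 1" by auto
qed

lemma NF0_zv: assumes "Y \<in> Zp3" "Y \<noteq> zp_zero" shows "zv (NF D zp_zero Y) = 2 * zv Y + 1"
proof -
  have "NF D zp_zero Y = zp_neg (zp_mul (zp_of_int D) (zp_mul Y Y))" unfolding NF_def using assms by simp
  then show ?thesis using R_facts[OF assms] by simp
qed

end



lemma NF00: "NF D zp_zero zp_zero = zp_zero" unfolding NF_def by simp

lemma chi_add_dvd:
  assumes "x \<in> Zp3" "y \<in> Zp3" "x \<noteq> zp_zero" "\<And>n. 3^Suc (zv x) dvd y n"
  shows "zp_add x y \<noteq> zp_zero" "chi E (zp_add x y) = chi E x"
  using zv_add[OF assms] unfolding chi_def by auto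

lemma Bmul_dvd:
  assumes "t \<in> Zp3" "9 dvd B"
  shows "3^(zv t + 2) dvd zp_mul (zp_of_int B) t n"
proof -
  have "(9::int) = 3^2" by simp
  then have "3^2 dvd B" using assms(2) by simp
  moreover have "3^zv t dvd t n" by (rule zv_dvd[OF assms(1)])
  ultimately have "3^2 * 3^zv t dvd B * t n" by (rule mult_dvd_mono)
  then have m: "3^(zv t + 2) dvd B * t n"
    by (simp add: power_add ac_simps)
  have e: "zp_mul (zp_of_int B) t n = (B * t n) mod 3^n" by (simp add: zp_mul_def zp_of_int_def mod_mult_left_eq)
  show ?thesis
  proof (cases "zv t + 2 \<le> n")
    case True
    then have "(3::int)^(zv t + 2) dvd 3^n" by (rule le_imp_power_dvd)
    then show ?thesis unfolding e using m by (simp add: dvd_mod)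
  next
    case False
    then have "(3::int)^n dvd 3^(zv t + 2)" by (intro le_imp_power_dvd) simp
    then have "3^n dvd B * t n" using m by (rule dvd_trans)
    then show ?thesis unfolding e by (simp add: dvd_eq_mod_eq_0)
  qed
qed

context
  fixes D d E A B \<alpha> :: int
  assumes Dd: "D = 3 * d" and d3: "\<not> 3 dvd d" and Edef: "E = (- d) mod 3"
    and Aa: "A = 3 * \<alpha>" and aE: "\<alpha> mod 3 = E" and B9: "9 dvd B"
begin

lemma E12: "E = 1 \<or> E = 2"
proof -
  have "E mod 3 \<noteq> 0" using E3[OF Dd d3 Edef] by (simp add: dvd_eq_mod_eq_0)
  moreover have "E mod 3 = E" "0 \<le> E" "E < 3" using Edef by auto
  ultimately show ?thesis by linarith
qed

lemma NF_chi1: assumes "X \<in> Zp3" "Y \<in> Zp3" "NF D X Y \<noteq> zp_zero" shows "chi E (NF D X Y) = 1"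
proof -
  have "X \<noteq> zp_zero \<or> Y \<noteq> zp_zero" using assms(3) NF00 by auto
  then show ?thesis using NF_facts[OF Dd d3 Edef assms(1,2)] by auto
qed

lemma constA: "zp_of_int A \<noteq> zp_zero" "zv (zp_of_int A) = 1" "chi E (zp_of_int A) = 1"
proof -
  have a3: "\<not> 3 dvd \<alpha>" using aE E12 by (auto simp: dvd_eq_mod_eq_0)
  note r = zv_const[of A 1 \<alpha>, OF _ a3]
  show "zp_of_int A \<noteq> zp_zero" "zv (zp_of_int A) = 1" using r Aa by auto
  have "chi E (zp_of_int A) = (E * E) mod 3" unfolding chi_def using r Aa aE by simp
  then show "chi E (zp_of_int A) = 1" using E12 by auto
qed

lemma point_chi:
  assumes Z: "t0 \<in> Zp3" "t1 \<in> Zp3" "t2 \<in> Zp3" "t3 \<in> Zp3" "t4 \<in> Zp3"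
    and eq1: "zp_mul t0 t1 = NF D t2 t3"
    and eq2: "zp_mul (zp_add t0 (zp_mul (zp_of_int A) t1)) (zp_add t0 (zp_mul (zp_of_int B) t1)) = NF D t2 t4"
    and nz: "\<not> (t0 = zp_zero \<and> t1 = zp_zero \<and> t2 = zp_zero \<and> t3 = zp_zero \<and> t4 = zp_zero)"
  defines "F1 \<equiv> zp_add t0 (zp_mul (zp_of_int A) t1)" and "F2 \<equiv> zp_add t0 (zp_mul (zp_of_int B) t1)"
  shows "t1 \<noteq> zp_zero" "t0 \<noteq> zp_zero \<longrightarrow> chi E t0 = chi E t1"
    "F1 \<noteq> zp_zero \<longrightarrow> chi E F1 = chi E t1" "F2 \<noteq> zp_zero \<longrightarrow> chi E F2 = chi E t1"
    "F1 \<noteq> zp_zero \<or> F2 \<noteq> zp_zero"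
proof -
  have E3': "\<not> 3 dvd E" using E12 by auto
  show t1: "t1 \<noteq> zp_zero"
  proof
    assume t1: "t1 = zp_zero"
    have "NF D t2 t3 = zp_zero" using eq1 t1 by simp
    then have t23: "t2 = zp_zero" "t3 = zp_zero" using NF_facts(1)[OF Dd d3 Edef Z(3,4)] by auto
    have e2: "zp_mul t0 t0 = NF D zp_zero t4" using eq2 t1 t23 Z by simp
    show False
    proof (cases "t4 = zp_zero")
      case True
      then have "zp_mul t0 t0 = zp_zero" using e2 NF00 by simp
      then have "t0 = zp_zero" using sq_facts(1)[OF Dd d3 Edef Z(1)] by auto
      then show False using nz t1 t23 True by simp
    next
      case False
      have "NF D zp_zero t4 \<noteq> zp_zero" using NF_facts(1)[OF Dd d3 Edef _ Z(5)] False by simp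
      then have t0: "t0 \<noteq> zp_zero" using e2 by auto
      have "zv (zp_mul t0 t0) = 2 * zv t0" using sq_facts(2)[OF Dd d3 Edef Z(1) t0] .
      moreover have "zv (NF D zp_zero t4) = 2 * zv t4 + 1" using NF0_zv[OF Dd d3 Edef Z(5) False] .
      ultimately have "2 * zv t0 = 2 * zv t4 + 1" using e2 by simp
      then show False by presburger
    qed
  qed
  have c1: "chi E t1 = 1 \<or> chi E t1 = 2" using chi_range[OF Z(2) t1 E3'] .
  show c0: "t0 \<noteq> zp_zero \<longrightarrow> chi E t0 = chi E t1"
  proof
    assume t0: "t0 \<noteq> zp_zero"
    have "zp_mul t0 t1 \<noteq> zp_zero" using zv_mul(1)[OF Z(1,2) t0 t1] .
    then have "chi E (zp_mul t0 t1) = 1" using eq1 NF_chi1[OF Z(3,4)] by simp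
    then have "(chi E t0 * chi E t1) mod 3 = 1" using chi_mul[OF Z(1,2) t0 t1] by simp
    then show "chi E t0 = chi E t1" using mod3_inv chi_range[OF Z(1) t0 E3'] c1 by blast
  qed
  define a where "a = zp_mul (zp_of_int A) t1"
  define b where "b = zp_mul (zp_of_int B) t1"
  have aZ: "a \<in> Zp3" and bZ: "b \<in> Zp3" unfolding a_def b_def using Z by simp_all
  have a0: "a \<noteq> zp_zero" and za: "zv a = 1 + zv t1" unfolding a_def
    using zv_mul[OF zp_of_int_Zp3 Z(2) constA(1) t1] constA(2) by auto
  have ca: "chi E a = chi E t1" unfolding a_def
    using chi_mul[OF zp_of_int_Zp3 Z(2) constA(1) t1, of E] constA(3) c1 by auto
  have bd: "3^(zv t1 + 2) dvd b n" for n unfolding b_def by (rule Bmul_dvd[OF Z(2) B9])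
  have F1: "F1 = zp_add t0 a" and F2: "F2 = zp_add t0 b" unfolding F1_def F2_def a_def b_def by simp_all
  have F1Z: "F1 \<in> Zp3" and F2Z: "F2 \<in> Zp3" using F1 F2 aZ bZ Z by simp_all
  have good: "(F1 \<noteq> zp_zero \<and> chi E F1 = chi E t1) \<or> (F2 \<noteq> zp_zero \<and> chi E F2 = chi E t1)"
  proof (cases "t0 = zp_zero")
    case True
    then have "F1 = a" using F1 aZ by simp
    then show ?thesis using a0 ca by simp
  next
    case t0: False
    have ct: "chi E t0 = chi E t1" using c0 t0 by simp
    show ?thesis
    proof (cases "zv t0 \<le> zv t1")
      case True
      then have "zv t0 < zv a" using za by simp
      then show ?thesis using chi_add[OF Z(1) aZ t0] ct F1 by simp
    next
      case False
      show ?thesis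
      proof (cases "zv t0 = zv t1 + 1")
        case True
        have h: "3^Suc (zv t0) dvd b n" for n using bd[of n] True by simp
        have "zp_add t0 b \<noteq> zp_zero" "chi E (zp_add t0 b) = chi E t0"
          using chi_add_dvd[OF Z(1) bZ t0 h] by auto
        then show ?thesis using ct F2 by simp
      next
        case False': False
        then have "zv a < zv t0" using za False by simp
        then have "zp_add a t0 \<noteq> zp_zero \<and> chi E (zp_add a t0) = chi E a"
          using chi_add[OF aZ Z(1) a0] by simp
        then show ?thesis using ca F1 by (simp add: add_comm)
      qed
    qed
  qed
  have both: "chi E F1 = chi E F2" if "F1 \<noteq> zp_zero" "F2 \<noteq> zp_zero"
  proof -
    have "zp_mul F1 F2 \<noteq> zp_zero" using zv_mul(1)[OF F1Z F2Z that] .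
    then have "chi E (zp_mul F1 F2) = 1" using eq2 NF_chi1[OF Z(3,5)] unfolding F1_def F2_def by simp
    then have "(chi E F1 * chi E F2) mod 3 = 1" using chi_mul[OF F1Z F2Z that] by simp
    then show ?thesis using mod3_inv chi_range[OF F1Z that(1) E3'] chi_range[OF F2Z that(2) E3'] by blast
  qed
  show "F1 \<noteq> zp_zero \<longrightarrow> chi E F1 = chi E t1" using good both by auto
  show "F2 \<noteq> zp_zero \<longrightarrow> chi E F2 = chi E t1" using good both by auto
  show "F1 \<noteq> zp_zero \<or> F2 \<noteq> zp_zero" using good by auto
qed

end


lemma one_Zp3: "zp_of_int 1 \<in> Zp3" by simp
lemma one_nz: "zp_of_int 1 \<noteq> zp_zero"
proof
  assume "zp_of_int 1 = zp_zero"
  then have "zp_of_int 1 1 = zp_zero 1" by simp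
  then show False by (simp add: zp_of_int_def)
qed

lemma mul_one: "x \<in> Zp3 \<Longrightarrow> zp_mul x (zp_of_int 1) = x"
  by (rule ext) (simp add: zp_mul_def zp_of_int_def mod_mult_right_eq Zp3_mod)

lemma q3_eq_zero: "x \<in> Zp3 \<Longrightarrow> q3_eq (x, zp_of_int 1) q3_zero \<longleftrightarrow> x = zp_zero"
  by (simp add: q3_eq_def q3_zero_def q3_of_zp_def mul_one)

lemma hilbert_one:
  assumes "p \<in> Zp3" "r \<in> Zp3" "X \<in> Zp3" "Y \<in> Zp3" "X \<noteq> zp_zero \<or> Y \<noteq> zp_zero"
    and h: "\<And>n. zp_mul p r n = (X n * X n - D * (Y n * Y n)) mod 3^n"
  shows "hilbert3 (p, r) (q3_of_zp (zp_of_int D)) = 1"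
proof -
  let ?one = "zp_of_int 1"
  let ?x = "(r, ?one)" and ?y = "(Y, ?one)" and ?z = "(X, ?one)"
  have Q: "?x \<in> Q3" "?y \<in> Q3" "?z \<in> Q3" using assms one_nz by (auto simp: Q3_def)
  have nt: "\<not> (q3_eq ?x q3_zero \<and> q3_eq ?y q3_zero \<and> q3_eq ?z q3_zero)"
    using q3_eq_zero assms by auto
  have eq: "q3_eq (q3_mul ?z ?z) (q3_add (q3_mul (p, r) (q3_mul ?x ?x)) (q3_mul (q3_of_zp (zp_of_int D)) (q3_mul ?y ?y)))"
  proof -
    have dv: "3^n dvd X n * X n * r n - (p n * (r n * r n) + D * (Y n * Y n) * r n)" for n
    proof -
      have "(p n * r n) mod 3^n = (X n * X n - D * (Y n * Y n)) mod 3^n" using h[of n] by (simp add: zp_mul_def)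
      then have "3^n dvd p n * r n - (X n * X n - D * (Y n * Y n))" by (simp only: mod_eq_dvd_iff)
      then have "3^n dvd r n * (p n * r n - (X n * X n - D * (Y n * Y n)))" by simp
      moreover have "X n * X n * r n - (p n * (r n * r n) + D * (Y n * Y n) * r n) = - (r n * (p n * r n - (X n * X n - D * (Y n * Y n))))"
        by (simp add: algebra_simps)
      ultimately show ?thesis by simp
    qed
    have core: "zp_mul (zp_mul X X) r = zp_add (zp_mul p (zp_mul r r)) (zp_mul (zp_mul (zp_of_int D) (zp_mul Y Y)) r)"
    proof (rule ext)
      fix n
      have "(X n * X n * r n) mod 3^n = (p n * (r n * r n) + D * (Y n * Y n) * r n) mod 3^n"
        using dv[of n] by (simp only: mod_eq_dvd_iff)
      then show "zp_mul (zp_mul X X) r n = zp_add (zp_mul p (zp_mul r r)) (zp_mul (zp_mul (zp_of_int D) (zp_mul Y Y)) r) n"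
        by (simp add: zp_mul_def zp_add_def zp_of_int_def mod_simps)
    qed
    show ?thesis
      unfolding q3_eq_def q3_mul_def q3_add_def q3_of_zp_def
      using core assms(1-4) by (simp add: mul_one)
  qed
  have ex: "\<exists>x\<in>Q3. \<exists>y\<in>Q3. \<exists>z\<in>Q3.
            \<not> (q3_eq x q3_zero \<and> q3_eq y q3_zero \<and> q3_eq z q3_zero) \<and>
            q3_eq (q3_mul z z) (q3_add (q3_mul (p, r) (q3_mul x x)) (q3_mul (q3_of_zp (zp_of_int D)) (q3_mul y y)))"
    apply (rule bexI[OF _ Q(1)])
    apply (rule bexI[OF _ Q(2)])
    apply (rule bexI[OF _ Q(3)])
    using nt eq by (rule conjI)
  show ?thesis unfolding hilbert3_def using ex by (rule if_P)
qed



lemma shift_compat: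
  assumes "a \<in> Zp3" "\<And>n. 3^k dvd a n"
  shows "(a (Suc n + k) div 3^k) mod 3^n = (a (n + k) div 3^k) mod 3^n"
proof -
  have c: "a (Suc n + k) mod 3^(n+k) = a (n + k)" using Zp3_compat[OF assms(1), of "n+k" "Suc n + k"] by simp
  then have "a (Suc n + k) mod 3^(n+k) = a (n + k) mod 3^(n+k)" using Zp3_mod[OF assms(1)] by simp
  then have "3^(n+k) dvd a (Suc n + k) - a (n + k)" by (simp only: mod_eq_dvd_iff)
  then obtain z where z: "a (Suc n + k) - a (n + k) = 3^(n+k) * z" by (auto simp: dvd_def)
  obtain w1 where w1: "a (Suc n + k) = 3^k * w1" using assms(2) by (auto simp: dvd_def)
  obtain w0 where w0: "a (n + k) = 3^k * w0" using assms(2) by (auto simp: dvd_def)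
  have "3^k * (w1 - w0) = 3^k * (3^n * z)" using z w1 w0 by (simp add: power_add algebra_simps)
  then have "w1 - w0 = 3^n * z" by simp
  then have "w1 mod 3^n = w0 mod 3^n" by (simp add: mod_eq_dvd_iff)
  then show ?thesis using w1 w0 by simp
qed

lemma scaled:
  assumes "a \<in> Zp3" "\<And>n. 3^k dvd a n"
    and hs: "\<And>n. (e * s n ^ 2) mod 3^n = (a (n + k) div 3^k) mod 3^n"
  shows "(3^k * e * s n ^ 2) mod 3^n = a n"
proof -
  have "3^n dvd e * s n ^ 2 - a (n + k) div 3^k" using hs[of n] by (simp only: mod_eq_dvd_iff)
  then obtain z where z: "e * s n ^ 2 - a (n + k) div 3^k = 3^n * z" by (auto simp: dvd_def)
  obtain w where w: "a (n + k) = 3^k * w" using assms(2) by (auto simp: dvd_def)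
  have "3^k * e * s n ^ 2 = a (n + k) + 3^n * (3^k * z)"
  proof -
    have ez: "e * s n ^ 2 = w + 3^n * z" using z w by simp
    have "3^k * e * s n ^ 2 = 3^k * (e * s n ^ 2)" by (simp add: ac_simps)
    also have "\<dots> = 3^k * (w + 3^n * z)" using ez by simp
    also have "\<dots> = 3^k * w + 3^n * (3^k * z)" by (simp add: algebra_simps)
    finally show ?thesis using w by simp
  qed
  then have "(3^k * e * s n ^ 2) mod 3^n = a (n + k) mod 3^n" by simp
  also have "\<dots> = a n" using Zp3_compat[OF assms(1), of n "n + k"] by simp
  finally show ?thesis .
qed

lemma scale_elem:
  assumes "s \<in> Zp3" "s (Suc j) mod 3 = 1"
  defines "W \<equiv> \<lambda>n. (3^j * s n) mod 3^n"
  shows "W \<in> Zp3" "W \<noteq> zp_zero" "\<And>n. (W n * W n) mod 3^n = (3^(2*j) * s n ^ 2) mod 3^n"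
proof -
  show "W \<in> Zp3"
  proof (rule modcompat_I[of _ "\<lambda>n. 3^j * s n"])
    show "W n = 3^j * s n mod 3^n" for n by (simp add: W_def)
    show "3^j * s (Suc n) mod 3^n = 3^j * s n mod 3^n" for n
      using Zp3_Suc[OF assms(1), of n] by (rule mod_mult_cong[OF refl])
  qed
  have p: "(3::int)^Suc j = 3^j * 3" by simp
  have "W (Suc j) = (3^j * s (Suc j)) mod (3^j * 3)" unfolding W_def p by simp
  also have "\<dots> = 3^j * (s (Suc j) mod 3)" by (rule mod_mult_mult1)
  finally have "W (Suc j) = 3^j" using assms(2) by simp
  then have "W (Suc j) \<noteq> zp_zero (Suc j)" by simp
  then show "W \<noteq> zp_zero" by metis
  show "(W n * W n) mod 3^n = (3^(2*j) * s n ^ 2) mod 3^n" for n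
  proof -
    have "(W n * W n) mod 3^n = ((3^j * s n) * (3^j * s n)) mod 3^n" unfolding W_def by (rule mod_mult_eq)
    also have "(3^j * s n) * (3^j * s n) = 3^(2*j) * s n ^ 2"
    proof -
      have pj: "(3::int)^(2*j) = 3^j * 3^j" by (simp add: mult_2 power_add)
      have "(3^j * s n) * (3^j * s n) = 3^j * 3^j * (s n * s n)" by (simp add: algebra_simps)
      then show ?thesis by (simp only: pj power2_eq_square)
    qed
    finally show ?thesis .
  qed
qed



lemma E2mod: fixes E :: int assumes "E = 1 \<or> E = 2" shows "E^(2*j) mod 3 = 1"
proof -
  have "E^2 mod 3 = 1" using assms by auto
  have "E^(2*j) mod 3 = (E^2)^j mod 3" by (simp add: power_mult)
  also have "\<dots> = ((E^2) mod 3)^j mod 3" by (simp add: power_mod)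
  also have "\<dots> = 1" using \<open>E^2 mod 3 = 1\<close> by simp
  finally show ?thesis .
qed

context
  fixes D d E :: int
  assumes Dd: "D = 3 * d" and d3: "\<not> 3 dvd d" and Edef: "E = (- d) mod 3"
begin

lemma E12': "E = 1 \<or> E = 2"
proof -
  have "E mod 3 \<noteq> 0" using E3[OF Dd d3 Edef] by (simp add: dvd_eq_mod_eq_0)
  moreover have "E mod 3 = E" "0 \<le> E" "E < 3" using Edef by auto
  ultimately show ?thesis by linarith
qed

lemma norm_rep:
  assumes aZ: "a \<in> Zp3" and a0: "a \<noteq> zp_zero" and ca: "chi E a = 1"
  shows "\<exists>X\<in>Zp3. \<exists>Y\<in>Zp3. (X \<noteq> zp_zero \<or> Y \<noteq> zp_zero) \<and> (\<forall>n. a n = (X n * X n - D * (Y n * Y n)) mod 3^n)"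
proof -
  define k where "k = zv a"
  have dk: "3^k dvd a n" for n unfolding k_def by (rule zv_dvd[OF aZ])
  define u where "u n = a (n + k) div 3^k" for n
  have uc: "u (Suc n) mod 3^n = u n mod 3^n" for n unfolding u_def using shift_compat[OF aZ dk] by simp
  have u1: "u 1 mod 3 = zdig a" unfolding u_def k_def using zv_fwd(2)[OF aZ a0, of "1 + zv a"] by simp
  have dg: "zdig a = 1 \<or> zdig a = 2" by (rule zdig_cases[OF aZ a0])
  have E12: "E = 1 \<or> E = 2" by (rule E12')
  define j where "j = k div 2"
  have "k = 2 * j \<or> k = 2 * j + 1" unfolding j_def by presburger
  then show ?thesis
  proof
    assume kj: "k = 2 * j"
    have "chi E a = (zdig a * (E^k mod 3)) mod 3" unfolding chi_def k_def by (simp add: mod_mult_right_eq)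
    then have "zdig a mod 3 = 1" using ca E2mod[OF E12, of j] kj by simp
    then have z1: "zdig a = 1" using dg by auto
    obtain s where sZ: "s \<in> Zp3" and hs: "\<forall>n. (1 * s n ^ 2) mod 3^n = u n mod 3^n \<and> (n \<ge> 1 \<longrightarrow> s n mod 3 = 1)"
      using hensel[of 1 u] uc u1 z1 by auto
    have s1: "s (Suc j) mod 3 = 1" using hs by simp
    note W = scale_elem[OF sZ s1]
    have sc: "(3^k * 1 * s n ^ 2) mod 3^n = a n" for n
      using scaled[OF aZ dk, of 1 s] hs unfolding u_def by simp
    define Wf where "Wf = (\<lambda>n. (3^j * s n) mod 3^n)"
    have eqs: "\<forall>n. a n = (Wf n * Wf n - D * (zp_zero n * zp_zero n)) mod 3^n"
    proof
      fix n
      show "a n = (Wf n * Wf n - D * (zp_zero n * zp_zero n)) mod 3^n" unfolding Wf_def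
      proof -
      have "((3^j * s n) mod 3^n * ((3^j * s n) mod 3^n) - D * (zp_zero n * zp_zero n)) mod 3^n
          = ((3^j * s n) mod 3^n * ((3^j * s n) mod 3^n)) mod 3^n" by simp
      also have "\<dots> = (3^(2*j) * s n ^ 2) mod 3^n" using W(3)[of n] by simp
      also have "\<dots> = a n" using sc[of n] kj by simp
      finally show "a n = ((3^j * s n) mod 3^n * ((3^j * s n) mod 3^n) - D * (zp_zero n * zp_zero n)) mod 3^n" by simp
    qed
    qed
    have "Wf \<in> Zp3" "Wf \<noteq> zp_zero" using W(1,2) unfolding Wf_def by simp_all
    then show ?thesis
      apply -
      apply (rule bexI[of _ Wf])
       apply (rule bexI[of _ zp_zero])
      using eqs by simp_all
  next
    assume kj: "k = 2 * j + 1"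
    have "chi E a = (zdig a * (E^k mod 3)) mod 3" unfolding chi_def k_def by (simp add: mod_mult_right_eq)
    moreover have "E^k mod 3 = E"
    proof -
      have "E^k mod 3 = ((E^(2*j) mod 3) * E) mod 3" unfolding kj by (simp add: mod_mult_left_eq mod_mult_right_eq mult.commute)
      then show ?thesis using E2mod[OF E12, of j] E12 by auto
    qed
    ultimately have "(zdig a * E) mod 3 = 1" using ca by simp
    then have zE: "zdig a = E" using mod3_inv dg E12 by blast
    have nd: "\<not> 3 dvd (- d)" using d3 by simp
    have u1': "u 1 mod 3 = (- d) mod 3" using u1 zE Edef by simp
    obtain s where sZ: "s \<in> Zp3" and hs: "\<forall>n. ((- d) * s n ^ 2) mod 3^n = u n mod 3^n \<and> (n \<ge> 1 \<longrightarrow> s n mod 3 = 1)"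
      using hensel[OF nd, of u] uc u1' by auto
    have s1: "s (Suc j) mod 3 = 1" using hs by simp
    note W = scale_elem[OF sZ s1]
    have sc: "(3^k * (- d) * s n ^ 2) mod 3^n = a n" for n
      using scaled[OF aZ dk, of "- d" s] hs unfolding u_def by simp
    define Wf where "Wf = (\<lambda>n. (3^j * s n) mod 3^n)"
    have eqs: "\<forall>n. a n = (zp_zero n * zp_zero n - D * (Wf n * Wf n)) mod 3^n"
    proof
      fix n
      show "a n = (zp_zero n * zp_zero n - D * (Wf n * Wf n)) mod 3^n" unfolding Wf_def
      proof -
      let ?w = "(3^j * s n) mod 3^n"
      have "(zp_zero n * zp_zero n - D * (?w * ?w)) mod 3^n = ((- D) * (?w * ?w)) mod 3^n" by simp
      also have "\<dots> = ((- D) * ((?w * ?w) mod 3^n)) mod 3^n" by (rule mod_mult_right_eq[symmetric])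
      also have "\<dots> = ((- D) * ((3^(2*j) * s n ^ 2) mod 3^n)) mod 3^n" using W(3)[of n] by simp
      also have "\<dots> = ((- D) * (3^(2*j) * s n ^ 2)) mod 3^n" by (rule mod_mult_right_eq)
      also have "(- D) * (3^(2*j) * s n ^ 2) = 3^k * (- d) * s n ^ 2" using kj Dd by (simp add: algebra_simps)
      also have "(3^k * (- d) * s n ^ 2) mod 3^n = a n" by (rule sc)
      finally show "a n = (zp_zero n * zp_zero n - D * (?w * ?w)) mod 3^n" by simp
    qed
    qed
    have "Wf \<in> Zp3" "Wf \<noteq> zp_zero" using W(1,2) unfolding Wf_def by simp_all
    then show ?thesis
      apply -
      apply (rule bexI[of _ zp_zero])
       apply (rule bexI[of _ Wf])
      using eqs by simp_all
  qed
qed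

end


lemma exists_point:
  fixes D d A B \<alpha> \<beta> :: int
  assumes Dd: "D = 3 * d" and d3: "\<not> 3 dvd d" and Aa: "A = 3 * \<alpha>" and aE: "\<alpha> mod 3 = (- d) mod 3"
    and Bb: "B = 9 * \<beta>"
  shows "\<exists>t. in_S3 D A B t"
proof -
  define c where "c = - (\<alpha> + 3 * \<beta> + 9 * \<alpha> * \<beta>)"
  have cm: "c mod 3 = d mod 3"
  proof -
    have "c mod 3 = (- \<alpha>) mod 3"
    proof -
      have "3 dvd c - (- \<alpha>)" unfolding c_def by (simp add: algebra_simps)
      then show ?thesis by (simp only: mod_eq_dvd_iff)
    qed
    also have "\<dots> = (- (\<alpha> mod 3)) mod 3" by (rule mod_minus_eq[symmetric])
    also have "\<dots> = (- ((- d) mod 3)) mod 3" using aE by simp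
    also have "\<dots> = (- (- d)) mod 3" by (rule mod_minus_eq)
    finally show ?thesis by simp
  qed
  obtain s where sZ: "s \<in> Zp3" and hs: "\<forall>n. (d * s n ^ 2) mod 3^n = c mod 3^n \<and> (n \<ge> 1 \<longrightarrow> s n mod 3 = 1)"
    using hensel[OF d3, of "\<lambda>n. c"] cm by auto
  define t where "t = (\<lambda>i::nat. if i = 3 then zp_zero else if i = 4 then s else zp_of_int 1)"
  have t: "t 0 = zp_of_int 1" "t 1 = zp_of_int 1" "t 2 = zp_of_int 1" "t 3 = zp_zero" "t 4 = s"
    by (simp_all add: t_def)
  have Z: "\<forall>i\<le>4. t i \<in> Zp3" using sZ by (simp add: t_def)
  have nz: "\<exists>i\<le>4. t i \<noteq> zp_zero" using one_nz t by (intro exI[of _ 0]) simp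
  have e1: "zp_mul (t 0) (t 1) = zp_add (zp_mul (t 2) (t 2)) (zp_neg (zp_mul (zp_of_int D) (zp_mul (t 3) (t 3))))"
    unfolding t by simp
  have e2: "zp_mul (zp_add (t 0) (zp_mul (zp_of_int A) (t 1))) (zp_add (t 0) (zp_mul (zp_of_int B) (t 1))) =
       zp_add (zp_mul (t 2) (t 2)) (zp_neg (zp_mul (zp_of_int D) (zp_mul (t 4) (t 4))))"
  proof (rule ext)
    fix n
    have "3^n dvd d * s n ^ 2 - c" using hs by (simp add: mod_eq_dvd_iff)
    then have "3^n dvd 3 * (d * s n ^ 2 - c)" by (rule dvd_mult)
    moreover have "3 * (d * s n ^ 2 - c) = (1 + A) * (1 + B) - (1 - D * (s n * s n))"
      unfolding c_def Aa Bb Dd by (simp add: algebra_simps power2_eq_square)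
    ultimately have "((1 + A) * (1 + B)) mod 3^n = (1 - D * (s n * s n)) mod 3^n"
      by (simp add: mod_eq_dvd_iff)
    then show "zp_mul (zp_add (t 0) (zp_mul (zp_of_int A) (t 1))) (zp_add (t 0) (zp_mul (zp_of_int B) (t 1))) n =
       zp_add (zp_mul (t 2) (t 2)) (zp_neg (zp_mul (zp_of_int D) (zp_mul (t 4) (t 4)))) n"
      unfolding t by (simp add: zp_mul_def zp_add_def zp_neg_def zp_of_int_def mod_simps)
  qed
  show ?thesis unfolding in_S3_def using Z nz e1 e2 by blast
qed


theorem lemma5p2:
  fixes D A B :: int
  assumes "squarefree D"
    and "\<not> (\<exists>k::int. D = k^2)"
    and "3 dvd D"
    and "smooth_S A B"
    and "A mod 9 = (- D) mod 9"
    and "B mod 9 = 0"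
  shows "(\<exists>t. in_S3 D A B t) \<and> (\<forall>t. in_S3 D A B t \<longrightarrow> ev_alpha3 D A B t = 0)"
proof -
  have "\<exists>d. D = 3 * d" using assms(3) by (auto simp: dvd_def)
  then obtain d where Dd: "D = 3 * d" by blast
  have d3: "\<not> 3 dvd d"
  proof
    assume "3 dvd d"
    then have "(3::int) * 3 dvd 3 * d" by (rule mult_dvd_mono[OF dvd_refl])
    then have "(3::int)^2 dvd D" unfolding Dd by (simp only: power2_eq_square)
    then have "(3::int) dvd 1" using squarefreeD[OF assms(1)] by blast
    then show False by simp
  qed
  have "9 dvd A - (- D)" using assms(5) by (simp only: mod_eq_dvd_iff)
  then have A9: "9 dvd A + D" by simp
  then have "3 dvd A + D" by (rule dvd_trans[rotated]) simp
  then have "3 dvd A" using assms(3) by (simp add: dvd_add_left_iff)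
  then have "\<exists>\<alpha>. A = 3 * \<alpha>" by (auto simp: dvd_def)
  then obtain \<alpha> where Aa: "A = 3 * \<alpha>" by blast
  have "9 dvd 3 * (\<alpha> + d)" using A9 unfolding Aa Dd by (simp add: algebra_simps)
  then have "\<exists>k. 3 * (\<alpha> + d) = 9 * k" by (auto simp: dvd_def)
  then obtain k where "3 * (\<alpha> + d) = 9 * k" by blast
  then have "\<alpha> + d = 3 * k" by simp
  then have "3 dvd \<alpha> - (- d)" by simp
  then have aE: "\<alpha> mod 3 = (- d) mod 3" by (simp only: mod_eq_dvd_iff)
  have B9: "9 dvd B" using assms(6) by (simp add: dvd_eq_mod_eq_0)
  then have "\<exists>\<beta>. B = 9 * \<beta>" by (auto simp: dvd_def)
  then obtain \<beta> where Bb: "B = 9 * \<beta>" by blast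
  define E where "E = (- d) mod 3"
  have aE': "\<alpha> mod 3 = E" using aE E_def by simp
  have part1: "\<exists>t. in_S3 D A B t" by (rule exists_point[OF Dd d3 Aa aE Bb])
  have part2: "ev_alpha3 D A B t = 0" if St: "in_S3 D A B t" for t
  proof -
    have Z: "t 0 \<in> Zp3" "t 1 \<in> Zp3" "t 2 \<in> Zp3" "t 3 \<in> Zp3" "t 4 \<in> Zp3"
      using St unfolding in_S3_def by auto
    have nz: "\<not> (t 0 = zp_zero \<and> t 1 = zp_zero \<and> t 2 = zp_zero \<and> t 3 = zp_zero \<and> t 4 = zp_zero)"
    proof
      assume h: "t 0 = zp_zero \<and> t 1 = zp_zero \<and> t 2 = zp_zero \<and> t 3 = zp_zero \<and> t 4 = zp_zero"
      obtain i where "i \<le> 4" "t i \<noteq> zp_zero" using St unfolding in_S3_def by blast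
      moreover have "i = 0 \<or> i = 1 \<or> i = 2 \<or> i = 3 \<or> i = 4" using \<open>i \<le> 4\<close> by arith
      ultimately show False using h by auto
    qed
    have eq1: "zp_mul (t 0) (t 1) = NF D (t 2) (t 3)" using St unfolding in_S3_def NF_def by blast
    have eq2: "zp_mul (zp_add (t 0) (zp_mul (zp_of_int A) (t 1))) (zp_add (t 0) (zp_mul (zp_of_int B) (t 1))) = NF D (t 2) (t 4)"
      using St unfolding in_S3_def NF_def by blast
    define F1 where "F1 = zp_add (t 0) (zp_mul (zp_of_int A) (t 1))"
    define F2 where "F2 = zp_add (t 0) (zp_mul (zp_of_int B) (t 1))"
    note pc = point_chi[OF Dd d3 E_def Aa aE' B9 Z eq1 eq2 nz]
    have t1: "t 1 \<noteq> zp_zero" using pc(1) .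
    have c0: "t 0 \<noteq> zp_zero \<Longrightarrow> chi E (t 0) = chi E (t 1)" using pc(2) by blast
    have cF1: "F1 \<noteq> zp_zero \<Longrightarrow> chi E F1 = chi E (t 1)" using pc(3) unfolding F1_def by blast
    have cF2: "F2 \<noteq> zp_zero \<Longrightarrow> chi E F2 = chi E (t 1)" using pc(4) unfolding F2_def by blast
    have F12: "F1 \<noteq> zp_zero \<or> F2 \<noteq> zp_zero" using pc(5) unfolding F1_def F2_def .
    have F1Z: "F1 \<in> Zp3" and F2Z: "F2 \<in> Zp3" unfolding F1_def F2_def using Z by simp_all
    have cands: "q_cands A B t = [(t 0, F1), (t 1, F1), (t 0, F2), (t 1, F2)]"
      unfolding q_cands_def F1_def F2_def by simp
    have "\<exists>q. q_admissible A B t q"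
    proof (cases "F1 = zp_zero")
      case True
      then have "F2 \<noteq> zp_zero" using F12 by simp
      then have "q_admissible A B t (t 1, F2)" unfolding q_admissible_def cands using t1 by simp
      then show ?thesis by blast
    next
      case False
      then have "q_admissible A B t (t 1, F1)" unfolding q_admissible_def cands using t1 by simp
      then show ?thesis by blast
    qed
    then have qa: "q_admissible A B t (SOME q. q_admissible A B t q)" by (rule someI_ex)
    define q where "q = (SOME q. q_admissible A B t q)"
    have qa': "q \<in> set (q_cands A B t)" "snd q \<noteq> zp_zero" "fst q \<noteq> zp_zero"
      using qa unfolding q_def q_admissible_def by auto
    have qc: "q = (t 0, F1) \<or> q = (t 1, F1) \<or> q = (t 0, F2) \<or> q = (t 1, F2)" using qa'(1) unfolding cands by simp
    have pZ: "fst q \<in> Zp3" and rZ: "snd q \<in> Zp3" using qc Z F1Z F2Z by auto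
    have cp: "chi E (fst q) = chi E (t 1)" using qc qa'(3) c0 by auto
    have cr: "chi E (snd q) = chi E (t 1)" using qc qa'(2) cF1 cF2 by auto
    have E3': "\<not> 3 dvd E" using E3[OF Dd d3 E_def] .
    have mZ: "zp_mul (fst q) (snd q) \<in> Zp3" using pZ rZ by simp
    have m0: "zp_mul (fst q) (snd q) \<noteq> zp_zero" using zv_mul(1)[OF pZ rZ qa'(3) qa'(2)] .
    have "chi E (zp_mul (fst q) (snd q)) = (chi E (t 1) * chi E (t 1)) mod 3"
      using chi_mul[OF pZ rZ qa'(3) qa'(2)] cp cr by simp
    then have cm: "chi E (zp_mul (fst q) (snd q)) = 1" using mod3_sq[OF chi_range[OF Z(2) t1 E3']] by simp
    obtain X Y where XY: "X \<in> Zp3" "Y \<in> Zp3" "X \<noteq> zp_zero \<or> Y \<noteq> zp_zero"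
      "\<forall>n. zp_mul (fst q) (snd q) n = (X n * X n - D * (Y n * Y n)) mod 3^n"
      using norm_rep[OF Dd d3 E_def mZ m0 cm] by blast
    have "hilbert3 (fst q, snd q) (q3_of_zp (zp_of_int D)) = 1"
      using hilbert_one[OF pZ rZ XY(1-3)] XY(4) by blast
    then have "hilbert3 q (q3_of_zp (zp_of_int D)) = 1" by simp
    then show ?thesis unfolding ev_alpha3_def Let_def q_def[symmetric] by simp
  qed
  show ?thesis using part1 part2 by blast
qed


end
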